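(* Fix $w\in(0,1]$, $b>0$ and $c\in\mathbb{R}$, and let $\delta(x;w,b,c)$ be the posterior median for the normal slab. Then $$\delta(x;w,b,c)-\frac{x/b^2+c}{1/b^2+1}\to0\quad\text{as }|x|\to+\infty.$$
   Context: Consider the model $X\mid\mu\sim N(\mu,1)$ with prior $\mu\sim(1-w)\delta_0+w\,\gamma(\cdot;b,c)$, where $\delta_0$ is the point mass at $0$, $w\in[0,1]$, and $\gamma(\mu;b,c)=\frac{b}{\sqrt{2\pi}}\exp\{-b^2(\mu-c)^2/2\}$ (the $N(c,1/b^2)$ density) with $b>0$, $c\in\mathbb{R}$. $\delta(x;w,b,c)$ denotes the median of the posterior distribution of $\mu$ given $X=x$. *)

theory Defs
  imports "HOL-Analysis.Analysis"
begin

definition std_phi :: "real \<Rightarrow> real" where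
  "std_phi y = exp (- (y^2) / 2) / sqrt (2 * pi)"

definition slab_gamma :: "real \<Rightarrow> real \<Rightarrow> real \<Rightarrow> real" where
  "slab_gamma b c mu = b / sqrt (2 * pi) * exp (- (b^2) * (mu - c)^2 / 2)"

text \<open>Posterior distribution function P(mu \<le> t | X = x) under the prior
  (1 - w) delta_0 + w gamma(.; b, c), obtained by Bayes' rule.\<close>
definition post_cdf :: "real \<Rightarrow> real \<Rightarrow> real \<Rightarrow> real \<Rightarrow> real \<Rightarrow> real" where
  "post_cdf w b c x t =
     ((1 - w) * std_phi x * (if 0 \<le> t then 1 else 0)
        + w * (LINT mu|lborel. indicator {..t} mu * std_phi (x - mu) * slab_gamma b c mu))
     / ((1 - w) * std_phi x + w * (LINT mu|lborel. std_phi (x - mu) * slab_gamma b c mu))"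

definition post_median :: "real \<Rightarrow> real \<Rightarrow> real \<Rightarrow> real \<Rightarrow> real" where
  "post_median x w b c = Inf {t. post_cdf w b c x t \<ge> 1/2}"

end

theory Submission
  imports Defs "HOL-Probability.Distributions"
begin
definition "mm b c x = (x + b^2*c)/(1+b^2::real)"
definition "sd b = 1/sqrt(1+b^2::real)"
definition "GG b c x = b / (sqrt(2*pi) * sqrt(1+b^2)) * exp(-(b^2*(x-c)^2)/(2*(1+b^2::real)))"

lemma ident:
  assumes "0 < (b::real)"
  shows "std_phi (x-u) * slab_gamma b c u = GG b c x * normal_density (mm b c x) (sd b) u"
proof -
  have p: "1 + b^2 > 0" by (simp add: add_pos_nonneg)
  have sq: "(sd b)^2 = 1/(1+b^2)" unfolding sd_def using p by (simp add: power_divide)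
  have mq: "u - mm b c x = ((1+b^2)*u - x - b^2*c)/(1+b^2)" unfolding mm_def using p by (simp add: field_simps)
  have e: "- ((x-u)^2) / 2 + - (b^2) * (u - c)^2 / 2 = -(b^2*(x-c)^2)/(2*(1+b^2)) - ((u - mm b c x)^2) / (2 * (sd b)^2)"
    unfolding sq mq using p by (simp add: power_divide divide_simps) algebra
  have "std_phi (x-u) * slab_gamma b c u = (1 / sqrt (2 * pi) * (b / sqrt (2 * pi))) * (exp (- ((x-u)^2) / 2) * exp (- (b^2) * (u - c)^2 / 2))"
    unfolding std_phi_def slab_gamma_def by (simp only: times_divide_eq_left times_divide_eq_right mult_ac)
  also have "\<dots> = b / (sqrt(2*pi))^2 * exp (- ((x-u)^2) / 2 + - (b^2) * (u - c)^2 / 2)"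
    unfolding mult_exp_exp by (simp add: power2_eq_square)
  also have "\<dots> = GG b c x * normal_density (mm b c x) (sd b) u"
  proof -
    have expo: "exp (- ((x-u)^2) / 2 + - (b^2) * (u - c)^2 / 2) = exp (-(b^2*(x-c)^2)/(2*(1+b^2))) * exp (-(u - mm b c x)\<^sup>2/ (2 * (sd b)\<^sup>2))"
      unfolding e mult_exp_exp by simp
    have coef: "b / (sqrt(2*pi))^2 = b / (sqrt(2*pi) * sqrt(1+b^2)) * (1 / sqrt (2 * pi * (sd b)\<^sup>2))"
      using p by (simp add: sd_def power_divide real_sqrt_mult real_sqrt_divide field_simps)
    show ?thesis unfolding GG_def normal_density_def expo coef by (simp only: mult_ac)
  qed
  finally show ?thesis .
qed
definition "QQ s u = (LINT y|lborel. indicator {..u} y * normal_density 0 s y)"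

lemma sd_pos[simp]: "0 < sd b"
  unfolding sd_def by (simp add: add_pos_nonneg)

lemma integ: "0 < s \<Longrightarrow> A \<in> sets borel \<Longrightarrow> integrable lborel (\<lambda>y. indicator A y * normal_density m s y)"
  using integrable_mult_indicator[of A lborel "normal_density m s"] integrable_normal_density[of s m] by simp

lemma int_t:
  assumes "0 < (b::real)"
  shows "(LINT mu|lborel. indicator {..t} mu * std_phi (x - mu) * slab_gamma b c mu) = GG b c x * QQ (sd b) (t - mm b c x)"
proof -
  have "(\<lambda>mu. indicator {..t} mu * std_phi (x - mu) * slab_gamma b c mu) = (\<lambda>mu. GG b c x * (indicator {..t} mu * normal_density (mm b c x) (sd b) mu))"
    using ident[OF assms] by (auto simp: mult_ac)
  then have "(LINT mu|lborel. indicator {..t} mu * std_phi (x - mu) * slab_gamma b c mu) = GG b c x * (LINT mu|lborel. indicator {..t} mu * normal_density (mm b c x) (sd b) mu)"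
    by simp
  also have "(LINT mu|lborel. indicator {..t} mu * normal_density (mm b c x) (sd b) mu) = (LINT y|lborel. indicator {..t} (mm b c x + 1 * y) * normal_density (mm b c x) (sd b) (mm b c x + 1 * y))"
    using lborel_integral_real_affine[of 1 "\<lambda>mu. indicator {..t} mu * normal_density (mm b c x) (sd b) mu" "mm b c x"] by simp
  also have "\<dots> = QQ (sd b) (t - mm b c x)"
    unfolding QQ_def by (rule arg_cong[where f="integral\<^sup>L lborel"]) (auto simp: indicator_def normal_density_def)
  finally show ?thesis .
qed

lemma int_total:
  assumes "0 < (b::real)"
  shows "(LINT mu|lborel. std_phi (x - mu) * slab_gamma b c mu) = GG b c x"
proof -
  have "(LINT mu|lborel. std_phi (x - mu) * slab_gamma b c mu) = (LINT mu|lborel. GG b c x * normal_density (mm b c x) (sd b) mu)"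
    using ident[OF assms] by simp
  also have "\<dots> = GG b c x * (LINT mu|lborel. normal_density (mm b c x) (sd b) mu)" by simp
  also have "(LINT mu|lborel. normal_density (mm b c x) (sd b) mu) = 1" by (rule integral_normal_density) simp
  finally show ?thesis by simp
qed

lemma post_cdf_eq:
  assumes "0 < (b::real)"
  shows "post_cdf w b c x t = ((1-w) * std_phi x*(if 0 \<le> t then 1 else 0) + w*(GG b c x * QQ (sd b) (t - mm b c x))) / ((1-w) * std_phi x + w * GG b c x)"
  unfolding post_cdf_def int_t[OF assms] int_total[OF assms] ..

lemma QQ_mono: "0 < s \<Longrightarrow> u \<le> v \<Longrightarrow> QQ s u \<le> QQ s v"
  unfolding QQ_def by (rule integral_mono[OF integ integ]) (auto simp: indicator_def)

lemma QQ_refl: "QQ s (-e) = (LINT y|lborel. indicator {e..} y * normal_density 0 s y)"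
proof -
  have "QQ s (-e) = (LINT y|lborel. indicator {..-e} (0 + -1 * y) * normal_density 0 s (0 + -1*y))"
    unfolding QQ_def using lborel_integral_real_affine[of "-1" "\<lambda>y. indicator {..-e} y * normal_density 0 s y" 0] by simp
  also have "\<dots> = (LINT y|lborel. indicator {e..} y * normal_density 0 s y)"
    by (rule arg_cong[where f="integral\<^sup>L lborel"]) (auto simp: indicator_def normal_density_def)
  finally show ?thesis .
qed

lemma QQ_strict:
  assumes s: "0 < s" and e: "0 < e"
  shows "QQ s (-e) < 1/2" "QQ s e > 1/2"
proof -
  let ?f = "normal_density 0 s"
  define M where "M = (LINT y|lborel. indicator {-e<..<e} y * ?f y)"
  have i1: "integrable lborel (\<lambda>y. indicator {..-e} y * ?f y)" by (rule integ[OF s]) simp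
  have i2: "integrable lborel (\<lambda>y. indicator {-e<..<e} y * ?f y)" by (rule integ[OF s]) simp
  have i3: "integrable lborel (\<lambda>y. indicator {e..} y * ?f y)" by (rule integ[OF s]) simp
  have i4: "integrable lborel (\<lambda>y. indicator {..e} y * ?f y)" by (rule integ[OF s]) simp
  have i5: "integrable lborel (\<lambda>y. indicator {e<..} y * ?f y)" by (rule integ[OF s]) simp
  have "1 = (LINT y|lborel. ?f y)" using s by simp
  also have "\<dots> = (LINT y|lborel. indicator {..-e} y * ?f y + indicator {-e<..<e} y * ?f y + indicator {e..} y * ?f y)"
    using e by (intro arg_cong[where f="integral\<^sup>L lborel"]) (auto simp: indicator_def fun_eq_iff)
  also have "\<dots> = QQ s (-e) + M + QQ s (-e)"
    using i1 i2 i3 QQ_refl[of s e] by (simp add: QQ_def M_def)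
  finally have tot: "1 = 2 * QQ s (-e) + M" by simp
  have "M \<ge> (LINT y|lborel. indicator {-e<..<e} y * ?f e)"
    unfolding M_def
  proof (rule integral_mono[OF _ i2])
    show "integrable lborel (\<lambda>y. indicator {-e<..<e} y * ?f e)"
      using e by (intro integrable_mult_left) simp
    fix y
    show "indicator {-e<..<e} y * ?f e \<le> indicator {-e<..<e} y * ?f y"
    proof (cases "y \<in> {-e<..<e}")
      case True
      then have "y^2 \<le> e^2" by (simp add: abs_le_square_iff[symmetric] abs_le_iff)
      then have "-(e - 0)\<^sup>2 / (2 * s\<^sup>2) \<le> -(y - 0)\<^sup>2 / (2 * s\<^sup>2)" using s by (simp add: divide_right_mono)
      then have "exp (-(e - 0)\<^sup>2 / (2 * s\<^sup>2)) \<le> exp (-(y - 0)\<^sup>2 / (2 * s\<^sup>2))" by simp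
      then have "?f e \<le> ?f y" unfolding normal_density_def by (intro mult_left_mono) auto
      then show ?thesis using True by simp
    qed simp
  qed
  also have "(LINT y|lborel. indicator {-e<..<e} y * ?f e) = 2 * e * ?f e"
    using e by simp
  finally have Mge: "2 * e * ?f e \<le> M" .
  have "0 < 2 * e * ?f e" using e normal_density_pos[OF s, of 0 e] by simp
  then have Mpos: "M > 0" using Mge by linarith
  show neg: "QQ s (-e) < 1/2" using tot Mpos by simp
  have "1 = (LINT y|lborel. ?f y)" using s by simp
  also have "\<dots> = (LINT y|lborel. indicator {..e} y * ?f y + indicator {e<..} y * ?f y)"
    by (intro arg_cong[where f="integral\<^sup>L lborel"]) (auto simp: indicator_def fun_eq_iff)
  also have "\<dots> = QQ s e + (LINT y|lborel. indicator {e<..} y * ?f y)"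
    using i4 i5 by (simp add: QQ_def)
  also have "(LINT y|lborel. indicator {e<..} y * ?f y) \<le> QQ s (-e)"
    unfolding QQ_refl by (rule integral_mono[OF i5 i3]) (auto simp: indicator_def)
  finally show "QQ s e > 1/2" using neg by simp
qed

lemma GG_pos: "0 < b \<Longrightarrow> 0 < GG b c x"
  unfolding GG_def by (simp add: add_pos_nonneg)

lemma ev_small:
  assumes w: "0 < w" "w \<le> 1" and b: "0 < b" and a: "0 < \<alpha>"
  shows "eventually (\<lambda>x. (1-w) * std_phi x < \<alpha> * (w * GG b c x)) at_infinity"
proof -
  have p: "0 < 1 + b^2" by (simp add: add_pos_nonneg)
  define C where "C = (1-w) * sqrt(1+b^2) / (\<alpha> * w * b)"
  have C0: "0 \<le> C" unfolding C_def using w a b by simp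
  define K where "K = b^2*c^2 + 4*b^4*c^2"
  define D where "D = 2*K + 4*(1+b^2)*ln(C+1)"
  show ?thesis unfolding eventually_at_infinity
  proof (intro exI[of _ "\<bar>D\<bar> + 1"] allI impI)
    fix x :: real assume xR: "\<bar>D\<bar> + 1 \<le> norm x"
    then have "\<bar>D\<bar> + 1 \<le> \<bar>x\<bar>" by simp
    then have x1: "(\<bar>D\<bar> + 1) * (\<bar>D\<bar> + 1) \<le> \<bar>x\<bar> * \<bar>x\<bar>" by (intro mult_mono) auto
    have x2: "\<bar>x\<bar> * \<bar>x\<bar> = x^2" by (simp add: power2_eq_square)
    have x3: "(\<bar>D\<bar> + 1) * (\<bar>D\<bar> + 1) = (\<bar>D\<bar> + 1) + \<bar>D\<bar> * (\<bar>D\<bar> + 1)" by (simp add: algebra_simps)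
    have x4: "0 \<le> \<bar>D\<bar> * (\<bar>D\<bar> + 1)" by simp
    have "x^2 > D" using x1 x2 x3 x4 by linarith
    define E where "E = -(x^2)/2 + b^2*(x-c)^2/(2*(1+b^2))"
    define F where "F = -(b^2*(x-c)^2)/(2*(1+b^2))"
    have "2*(1+b^2)*E = -(x^2) - 2*b^2*c*x + b^2*c^2"
      unfolding E_def using p by (simp add: field_simps power2_eq_square)
    moreover have "- 2*b^2*c*x \<le> x^2/4 + 4*b^4*c^2"
    proof -
      have h0: "0 \<le> (x + 4*b^2*c)^2" by simp
      have h1: "(x + 4*b^2*c)^2 = x^2 + 8*(b^2*c*x) + 16*(b^4*c^2)" by algebra
      show ?thesis using h0 h1 by linarith
    qed
    ultimately have "2*(1+b^2)*E \<le> -(x^2)/2 + K" unfolding K_def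
      using zero_le_power2[of x] by linarith
    also have "\<dots> < -2*(1+b^2)*ln(C+1)" using \<open>x^2 > D\<close> unfolding D_def by (simp add: algebra_simps)
    finally have "(2*(1+b^2))*E < (2*(1+b^2))*(- ln (C+1))" by (simp add: algebra_simps)
    moreover have "0 < 2*(1+b^2)" using p by simp
    ultimately have "E < - ln (C+1)" by (simp only: mult_less_cancel_left_pos)
    then have "exp E < exp (- ln (C+1))" by simp
    also have "\<dots> = 1/(C+1)" using C0 by (simp add: exp_minus inverse_eq_divide)
    finally have "exp E < 1/(C+1)" .
    then have "C * exp E \<le> C * (1/(C+1))" using C0 by (intro mult_left_mono) auto
    also have "C * (1/(C+1)) < 1" using C0 by simp
    finally have "C * exp E < 1" .
    have EF: "exp E * exp F = exp (-(x^2)/2)"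
      unfolding mult_exp_exp E_def F_def by simp
    have "(1-w) * std_phi x = (\<alpha> * (w * GG b c x)) * (C * exp E)"
    proof -
      have "(\<alpha> * (w * GG b c x)) * (C * exp E) = (1-w) * (exp E * exp F) / sqrt(2*pi)"
        unfolding GG_def C_def F_def using w a b p by (simp add: field_simps real_sqrt_mult)
      then show ?thesis unfolding EF std_phi_def by simp
    qed
    also have "\<dots> < \<alpha> * (w * GG b c x)"
      using \<open>C * exp E < 1\<close> GG_pos[OF b, of c x] w a by simp
    finally show "(1-w) * std_phi x < \<alpha> * (w * GG b c x)" .
  qed
qed

theorem mainTheorem4:
  fixes w b c :: real
  assumes "0 < w" and "w \<le> 1" and "0 < b"
  shows "((\<lambda>x. post_median x w b c - (x / b^2 + c) / (1 / b^2 + 1)) \<longlongrightarrow> 0) at_infinity"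
proof (rule tendstoI)
  fix e :: real assume e: "0 < e"
  define \<epsilon> where "\<epsilon> = e/2"
  have ep: "0 < \<epsilon>" using e by (simp add: \<epsilon>_def)
  define s where "s = sd b"
  have s: "0 < s" by (simp add: s_def)
  define qp where "qp = QQ s \<epsilon>"
  define qn where "qn = QQ s (-\<epsilon>)"
  have qp: "qp > 1/2" and qn: "qn < 1/2" using QQ_strict[OF s ep] by (simp_all add: qp_def qn_def)
  define \<alpha> where "\<alpha> = min (2*qp - 1) (1/2 - qn)"
  have a: "0 < \<alpha>" using qp qn by (simp add: \<alpha>_def)
  show "eventually (\<lambda>x. dist (post_median x w b c - (x / b^2 + c) / (1 / b^2 + 1)) 0 < e) at_infinity"
    using ev_small[OF assms a, of c]
  proof eventually_elim
    case (elim x)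
    define A where "A = (1-w) * std_phi x"
    define B where "B = w * GG b c x"
    define m where "m = mm b c x"
    have A0: "0 \<le> A" unfolding A_def std_phi_def using assms by simp
    have B0: "0 < B" unfolding B_def using GG_pos[OF assms(3)] assms by simp
    have AB: "A < \<alpha> * B" using elim by (simp add: A_def B_def)
    have pc: "post_cdf w b c x t = (A * (if 0 \<le> t then 1 else 0) + B * QQ s (t - m)) / (A + B)" for t
      unfolding post_cdf_eq[OF assms(3)] A_def B_def s_def m_def by (simp add: mult_ac)
    define S where "S = {t. post_cdf w b c x t \<ge> 1/2}"
    have in1: "m + \<epsilon> \<in> S"
    proof -
      have "B * (2*qp - 1) \<ge> B * \<alpha>" using B0 by (intro mult_left_mono) (auto simp: \<alpha>_def)
      then have "2 * (A * (if 0 \<le> m + \<epsilon> then 1 else 0) + B * qp) \<ge> A + B"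
        using A0 AB by (auto simp: algebra_simps)
      then show ?thesis unfolding S_def pc using A0 B0 by (simp add: qp_def field_simps)
    qed
    have lb: "t \<ge> m - \<epsilon>" if "t \<in> S" for t
    proof (rule ccontr)
      assume "\<not> t \<ge> m - \<epsilon>"
      then have "QQ s (t - m) \<le> qn" unfolding qn_def by (intro QQ_mono[OF s]) simp
      then have "B * QQ s (t - m) \<le> B * qn" using B0 by (intro mult_left_mono) auto
      moreover have "B * (1 - 2*qn) \<ge> B * (2*\<alpha>)" using B0 by (intro mult_left_mono) (auto simp: \<alpha>_def min_def)
      ultimately have "2 * (A * (if 0 \<le> t then 1 else 0) + B * QQ s (t - m)) < A + B"
        using A0 AB a by (auto simp: algebra_simps)
      then have "post_cdf w b c x t < 1/2" unfolding pc using A0 B0 by (simp add: field_simps)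
      then show False using that by (simp add: S_def)
    qed
    have bdd: "bdd_below S" using lb by (auto simp: bdd_below_def)
    have "Inf S \<le> m + \<epsilon>" by (rule cInf_lower[OF in1 bdd])
    moreover have "Inf S \<ge> m - \<epsilon>" using in1 lb by (intro cInf_greatest) auto
    moreover have "post_median x w b c = Inf S" unfolding post_median_def S_def ..
    moreover have "(x / b^2 + c) / (1 / b^2 + 1) = m"
    proof -
      have h2: "b^2 \<noteq> 0" using assms(3) by simp
      have h1: "1 + b^2 \<noteq> 0" by (metis add_pos_nonneg zero_le_power2 zero_less_one less_irrefl)
      have "x / b^2 + c = (x + b^2*c)/b^2" using h2 by (simp add: field_simps)
      moreover have "1 / b^2 + 1 = (1+b^2)/b^2" using h2 by (simp add: field_simps)
      ultimately show ?thesis unfolding m_def mm_def using h1 h2 by simp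
    qed
    ultimately show ?case using e by (simp add: dist_real_def \<epsilon>_def abs_le_iff)
  qed
qed

end
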